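(* The function $g_1(t)^2$ is increasing and bounded from above and hence converges to a positive constant as $t$ tends to infinity.
   Context: Consider complete Ricci-flat multiple warped product metrics $dt^2 + \sum_{i=1}^{r} g_i^2(t)\, h_i$ on $[0,\infty) \times M_1 \times \cdots \times M_r$ ($r \geq 2$), where $(M_i,h_i)$ are Einstein manifolds of dimension $d_i$ and Einstein constant $\lambda_i$, with $M_1 = S^1$ (so $d_1=1$, $\lambda_1=0$) and $M_2,\ldots,M_r$ closed Einstein manifolds with $\lambda_i>0$, $d_i>1$; $n=\sum_i d_i$. The circle collapses smoothly at $t=0$: $g_1(0)=0$, $\dot g_1(0)=1$, $g_i(0)\neq 0$, $\dot g_i(0)=0$ for $i>1$. With $\xi = -\dot u + \operatorname{tr} L$ (here $u$ constant), variables $X_i = \frac{\sqrt{d_i}}{\xi}\frac{\dot g_i}{g_i}$, $Y_i = \frac{\sqrt{d_i}}{\xi}\frac{1}{g_i}$ satisfy, in a new variable $s$, $X_i' = X_i(\sum_j X_j^2 - 1) + \frac{\lambda_i Y_i^2}{\sqrt{d_i}}$, $Y_i' = Y_i(\sum_j X_j^2 - \frac{X_i}{\sqrt{d_i}})$. The Ricci-flat metrics correspond to the $(r-2)$-parameter family of trajectories emanating (as $s\to-\infty$) from the critical point $X_1=Y_1=1$, $X_i=Y_i=0$ ($i>1$) and lying in the locus $\sum_i X_i^2 + \sum_{i\geq 2}\lambda_i Y_i^2 = 1$, $\sum_i \sqrt{d_i} X_i = 1$, with $X_i, Y_i > 0$; the metric is recovered via $dt = \exp\left(\int_{s^*}^{s}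 \sum_j X_j^2\right) ds$ and $g_i = \frac{\sqrt{d_i}}{Y_i}\exp\left(\int_{s^*}^{s}\sum_j X_j^2\right)$ for a fixed $s^*$, so that $\dot g_i g_i = \frac{\sqrt{d_i}}{\operatorname{tr} L}\frac{X_i}{Y_i^2}$. These trajectories are defined for all $s$, give complete metrics ($t\to\infty$ as $s\to\infty$), and converge as $s\to\infty$ to the point $E$ with $X_1=0$, $X_i=\frac{\sqrt{d_i}}{n-1}$, $Y_i=\sqrt{\frac{n-2}{\lambda_i}}X_i$ ($i\geq 2$). *)

theory Defs
  imports "HOL-Analysis.Analysis"
begin

text \<open>Trajectories are given as X, Y :: real => nat => real, X s i being X_i(s)
  for indices i in {1..r}. The metric is recovered from a trajectory via
  dt = exp(int_{s0}^s sum_j X_j^2) ds and g_i = sqrt(d_i)/Y_i * exp(int_{s0}^s sum_j X_j^2).\<close>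

definition sumsqX :: "nat \<Rightarrow> (real \<Rightarrow> nat \<Rightarrow> real) \<Rightarrow> real \<Rightarrow> real" where
  "sumsqX r X s = (\<Sum>j=1..r. (X s j)^2)"

definition expfac :: "nat \<Rightarrow> (real \<Rightarrow> nat \<Rightarrow> real) \<Rightarrow> real \<Rightarrow> real \<Rightarrow> real" where
  "expfac r X s0 s = exp (LBINT \<sigma>=s0..s. sumsqX r X \<sigma>)"

text \<open>the radial coordinate t as a function of s (normalised so that t(s0) = 0;
  t is only determined up to an additive constant)\<close>
definition tcoord :: "nat \<Rightarrow> (real \<Rightarrow> nat \<Rightarrow> real) \<Rightarrow> real \<Rightarrow> real \<Rightarrow> real" where
  "tcoord r X s0 s = (LBINT \<sigma>=s0..s. expfac r X s0 \<sigma>)"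

definition gwarp :: "nat \<Rightarrow> (nat \<Rightarrow> nat) \<Rightarrow> (real \<Rightarrow> nat \<Rightarrow> real) \<Rightarrow> (real \<Rightarrow> nat \<Rightarrow> real)
    \<Rightarrow> real \<Rightarrow> nat \<Rightarrow> real \<Rightarrow> real" where
  "gwarp r d X Y s0 i s = sqrt (real (d i)) / Y s i * expfac r X s0 s"

end

theory Submission
  imports Defs
begin

lemma FTC_global:
  fixes f :: "real \<Rightarrow> real" and c :: real
  assumes contf: "\<And>x. isCont f x"
  shows "((\<lambda>u. LBINT y=c..u. f y) has_real_derivative f x) (at x)"
proof -
  have "(at x within {min c (x - 1)..max c (x + 1)}) = at x"
    by (intro at_within_interior) auto
  moreover have "min c (x - 1) \<le> x" "x \<le> max c (x + 1)" "min c (x - 1) \<le> c" "c \<le> max c (x + 1)"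
    by auto
  moreover have "continuous_on {min c (x - 1)..max c (x + 1)} f"
    using contf by (simp add: continuous_at_imp_continuous_on)
  ultimately show ?thesis
    using interval_integral_FTC2[of "min c (x - 1)" c "max c (x + 1)" f x]
    by (auto simp: has_real_derivative_iff_has_vector_derivative)
qed

theorem lemma4p7:
  fixes r :: nat and d :: "nat \<Rightarrow> nat" and lam :: "nat \<Rightarrow> real"
    and X Y :: "real \<Rightarrow> nat \<Rightarrow> real" and s0 :: real
  assumes r2: "r \<ge> 2"
    and d1: "d 1 = 1" and lam1: "lam 1 = 0"
    and dpos: "\<And>i. i \<in> {2..r} \<Longrightarrow> d i > 1"
    and lampos: "\<And>i. i \<in> {2..r} \<Longrightarrow> lam i > 0"
    and odeX: "\<And>s i. i \<in> {1..r} \<Longrightarrow>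
      ((\<lambda>s. X s i) has_real_derivative
         (X s i * ((\<Sum>j=1..r. (X s j)^2) - 1) + lam i * (Y s i)^2 / sqrt (real (d i)))) (at s)"
    and odeY: "\<And>s i. i \<in> {1..r} \<Longrightarrow>
      ((\<lambda>s. Y s i) has_real_derivative
         (Y s i * ((\<Sum>j=1..r. (X s j)^2) - X s i / sqrt (real (d i))))) (at s)"
    and startX1: "((\<lambda>s. X s 1) \<longlongrightarrow> 1) at_bot"
    and startY1: "((\<lambda>s. Y s 1) \<longlongrightarrow> 1) at_bot"
    and startX: "\<And>i. i \<in> {2..r} \<Longrightarrow> ((\<lambda>s. X s i) \<longlongrightarrow> 0) at_bot"
    and startY: "\<And>i. i \<in> {2..r} \<Longrightarrow> ((\<lambda>s. Y s i) \<longlongrightarrow> 0) at_bot"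
    and locus1: "\<And>s. (\<Sum>i=1..r. (X s i)^2) + (\<Sum>i=2..r. lam i * (Y s i)^2) = 1"
    and locus2: "\<And>s. (\<Sum>i=1..r. sqrt (real (d i)) * X s i) = 1"
    and Xpos: "\<And>s i. i \<in> {1..r} \<Longrightarrow> X s i > 0"
    and Ypos: "\<And>s i. i \<in> {1..r} \<Longrightarrow> Y s i > 0"
    and endX1: "((\<lambda>s. X s 1) \<longlongrightarrow> 0) at_top"
    and endX: "\<And>i. i \<in> {2..r} \<Longrightarrow>
      ((\<lambda>s. X s i) \<longlongrightarrow> sqrt (real (d i)) / (real (\<Sum>j=1..r. d j) - 1)) at_top"
    and endY: "\<And>i. i \<in> {2..r} \<Longrightarrow>
      ((\<lambda>s. Y s i) \<longlongrightarrow> sqrt ((real (\<Sum>j=1..r. d j) - 2) / lam i)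
          * (sqrt (real (d i)) / (real (\<Sum>j=1..r. d j) - 1))) at_top"
  shows "(\<forall>s1 s2. tcoord r X s0 s1 < tcoord r X s0 s2 \<longrightarrow>
            (gwarp r d X Y s0 1 s1)^2 < (gwarp r d X Y s0 1 s2)^2)
       \<and> (\<exists>B. \<forall>s. (gwarp r d X Y s0 1 s)^2 \<le> B)
       \<and> (\<exists>c>0. \<forall>e>0. \<exists>t0. \<forall>s. tcoord r X s0 s \<ge> t0 \<longrightarrow>
            \<bar>(gwarp r d X Y s0 1 s)^2 - c\<bar> < e)"
proof -
  define S where "S = sumsqX r X"
  define F where "F = (\<lambda>s::real. LBINT \<sigma>=s0..s. S \<sigma>)"
  define h where "h = (\<lambda>s::real. F s - ln (Y s 1))"
  have r1: "1 \<in> {1..r}" "2 \<in> {1..r}" "2 \<in> {2..r}" using r2 by auto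
  have contX: "isCont (\<lambda>s. X s j) x" if "j \<in> {1..r}" for j x
    using odeX[OF that] by (rule DERIV_isCont)
  have contS: "isCont S x" for x
    unfolding S_def sumsqX_def using contX
    by (intro continuous_intros) auto
  have dF: "(F has_real_derivative S x) (at x)" for x
    unfolding F_def by (rule FTC_global[OF contS])
  have Sx: "S x = (\<Sum>j=1..r. (X x j)^2)" for x unfolding S_def sumsqX_def by simp
  have dh: "(h has_real_derivative X x 1) (at x)" for x
  proof -
    have dl: "((\<lambda>s. ln (Y s 1)) has_real_derivative inverse (Y x 1) * (Y x 1 * (S x - X x 1 / sqrt (real (d 1))))) (at x)"
      by (rule DERIV_chain2[OF DERIV_ln odeY[OF r1(1), of x, folded Sx]]) (rule Ypos[OF r1(1)])
    have "(h has_real_derivative S x - inverse (Y x 1) * (Y x 1 * (S x - X x 1 / sqrt (real (d 1))))) (at x)"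
      unfolding h_def by (rule DERIV_diff[OF dF dl])
    then show ?thesis using Ypos[OF r1(1), of x] d1 by (simp add: field_simps)
  qed
  have hmono: "h a < h b" if "a < b" for a b
    using DERIV_pos_imp_increasing[OF that] dh Xpos[OF r1(1)] by blast
  have ef: "expfac r X s0 = (\<lambda>s. exp (F s))"
    by (simp add: expfac_def F_def S_def fun_eq_iff)
  have dT: "((\<lambda>s. tcoord r X s0 s) has_real_derivative exp (F x)) (at x)" for x
  proof -
    have "isCont (\<lambda>s. exp (F s)) y" for y
      using DERIV_isCont[OF dF] by (intro continuous_intros) auto
    then show ?thesis unfolding tcoord_def ef
      by (rule FTC_global)
  qed
  have tmono: "tcoord r X s0 a < tcoord r X s0 b" if "a < b" for a b
    using DERIV_pos_imp_increasing[OF that] dT by (meson exp_gt_zero)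
  have tiff: "a < b" if "tcoord r X s0 a < tcoord r X s0 b" for a b
    using tmono[of b a] that by (metis less_asym linorder_neqE_linordered_idom)
  have gw: "(gwarp r d X Y s0 1 s)^2 = exp (2 * h s)" for s
  proof -
    have "exp (2 * h s) = exp (h s) ^ 2"
      by (metis exp_of_nat_mult of_nat_numeral)
    also have "exp (h s) = exp (F s) / Y s 1"
      using Ypos[OF r1(1), of s] by (simp add: h_def exp_diff)
    finally have "exp (2 * h s) = (exp (F s) / Y s 1)^2" .
    then show ?thesis unfolding gwarp_def ef using d1 by (simp add: power_divide)
  qed
  define n where "n = real (\<Sum>j=1..r. d j)"
  have n3: "n \<ge> 3"
  proof -
    have "(\<Sum>j\<in>{1,2}. d j) \<le> (\<Sum>j=1..r. d j)"
      using r2 by (intro sum_mono2) auto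
    then have "3 \<le> (\<Sum>j=1..r. d j)" using d1 dpos[OF r1(3)] by simp
    then show ?thesis unfolding n_def by linarith
  qed
  define l where "l = sqrt ((n - 2) / lam 2) * (sqrt (real (d 2)) / (n - 1))"
  have lpos: "l > 0" unfolding l_def using n3 lampos[OF r1(3)] dpos[OF r1(3)] by simp
  have "eventually (\<lambda>s. Y s 2 > l / 2) at_top"
    using endY[OF r1(3)] lpos unfolding n_def[symmetric] l_def[symmetric]
    by (intro order_tendstoD(1)) auto
  then obtain s1 where s1: "\<And>s. s \<ge> s1 \<Longrightarrow> Y s 2 > l / 2"
    by (auto simp: eventually_at_top_linorder)
  define \<delta> where "\<delta> = lam 2 * (l/2)^2"
  have \<delta>pos: "\<delta> > 0" unfolding \<delta>_def using lpos lampos[OF r1(3)] by simp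
  have Sbound: "S s - 1 \<le> - \<delta>" if "s \<ge> s1" for s
  proof -
    have "lam 2 * (Y s 2)^2 \<le> (\<Sum>i=2..r. lam i * (Y s i)^2)"
      using r1(3) lampos[THEN less_imp_le] by (intro member_le_sum) (auto intro!: mult_nonneg_nonneg)
    moreover have "(l/2)^2 \<le> (Y s 2)^2"
      using s1[OF that] lpos by (intro power_mono) auto
    hence "\<delta> \<le> lam 2 * (Y s 2)^2" unfolding \<delta>_def using lampos[OF r1(3)] by simp
    ultimately show ?thesis using locus1[of s] Sx[of s] by linarith
  qed
  define k where "k = (\<lambda>s. h s + X s 1 / \<delta>)"
  have dk: "(k has_real_derivative X x 1 + (X x 1 * (S x - 1) + lam 1 * (Y x 1)^2 / sqrt (real (d 1))) / \<delta>) (at x)" for x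
    unfolding k_def by (rule DERIV_add[OF dh DERIV_cdivide[OF odeX[OF r1(1), of x, folded Sx]]])
  have kdec: "k b \<le> k s1" if "s1 \<le> b" for b
  proof (rule DERIV_nonpos_imp_nonincreasing[OF that])
    fix x assume "s1 \<le> x" "x \<le> b"
    then have x: "s1 \<le> x \<and> x \<le> b" by simp
    have "X x 1 * (S x - 1) \<le> X x 1 * (- \<delta>)"
      using Sbound[of x] x Xpos[OF r1(1), of x] by (intro mult_left_mono) auto
    hence "X x 1 + (X x 1 * (S x - 1) + lam 1 * (Y x 1)^2 / sqrt (real (d 1))) / \<delta> \<le> 0"
      using \<delta>pos lam1 by (simp add: field_simps)
    then show "\<exists>y. (k has_real_derivative y) (at x) \<and> y \<le> 0" using dk by blast
  qed
  have hbound: "h s \<le> k s1" for s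
  proof (cases "s \<ge> s1")
    case True
    then have "h s \<le> k s" unfolding k_def using Xpos[OF r1(1), of s] \<delta>pos by simp
    then show ?thesis using kdec[OF True] by simp
  next
    case False
    then have "h s < h s1" using hmono by simp
    moreover have "h s1 \<le> k s1" unfolding k_def using Xpos[OF r1(1), of s1] \<delta>pos by simp
    ultimately show ?thesis by simp
  qed
  define G where "G = (\<lambda>s. exp (2 * h s))"
  have Gmono: "G a \<le> G b" if "a \<le> b" for a b
    using hmono[of a b] that unfolding G_def by (cases "a = b") auto
  have Gbd: "G s \<le> exp (2 * k s1)" for s
    unfolding G_def using hbound[of s] by simp
  have bdd: "bdd_above (range G)" using Gbd by (intro bdd_aboveI[of _ "exp (2 * k s1)"]) auto
  define c where "c = (SUP s. G s)"
  have Gc: "G s \<le> c" for s unfolding c_def using bdd by (intro cSUP_upper) auto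
  have cpos: "c > 0" using Gc[of s0] unfolding G_def by (meson exp_gt_zero less_le_trans)
  have part1: "\<forall>s1 s2. tcoord r X s0 s1 < tcoord r X s0 s2 \<longrightarrow>
            (gwarp r d X Y s0 1 s1)^2 < (gwarp r d X Y s0 1 s2)^2"
  proof (intro allI impI)
    fix a b assume "tcoord r X s0 a < tcoord r X s0 b"
    then have "h a < h b" using tiff hmono by blast
    then show "(gwarp r d X Y s0 1 a)^2 < (gwarp r d X Y s0 1 b)^2"
      unfolding gw by simp
  qed
  have part2: "\<exists>B. \<forall>s. (gwarp r d X Y s0 1 s)^2 \<le> B"
    using Gbd unfolding G_def gw by blast
  have part3: "\<exists>c>0. \<forall>e>0. \<exists>t0. \<forall>s. tcoord r X s0 s \<ge> t0 \<longrightarrow>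
            \<bar>(gwarp r d X Y s0 1 s)^2 - c\<bar> < e"
  proof (rule exI[of _ c], intro conjI allI impI cpos)
    fix e :: real assume e: "e > 0"
    have "c - e < (SUP s. G s)" using e unfolding c_def by simp
    then obtain s' where s': "c - e < G s'" using less_cSUP_iff[OF _ bdd] by auto
    show "\<exists>t0. \<forall>s. tcoord r X s0 s \<ge> t0 \<longrightarrow> \<bar>(gwarp r d X Y s0 1 s)^2 - c\<bar> < e"
    proof (intro exI[of _ "tcoord r X s0 s'"] allI impI)
      fix s assume "tcoord r X s0 s \<ge> tcoord r X s0 s'"
      then have "s' \<le> s" using tmono[of s s'] by (cases "s < s'") auto
      then have "G s' \<le> G s" by (rule Gmono)
      then show "\<bar>(gwarp r d X Y s0 1 s)^2 - c\<bar> < e"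
        using s' Gc[of s] unfolding gw G_def by linarith
    qed
  qed
  show ?thesis using part1 part2 part3 by blast
qed

end
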